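(* Let $\Sigma\in\mathbb{R}^{N\times N}$ be symmetric positive definite, $\mu\in\mathbb{R}^N$, $\gamma\in[0,1]$, and let $L,R\subseteq\{1,\dots,N\}$ be disjoint nonempty index sets. For representatives $\hat w_L\in\mathbb{R}^{|L|}$, $\hat w_R\in\mathbb{R}^{|R|}$ define $v_L=\hat w_L^\top\Sigma_{LL}\hat w_L$, $s_L=\hat w_L^\top\mu_L$, $v_R=\hat w_R^\top\Sigma_{RR}\hat w_R$, $s_R=\hat w_R^\top\mu_R$, $c=\hat w_L^\top\Sigma_{LR}\hat w_R$, \[ \alpha_L^{\mathrm{raw}}=\frac{v_Rs_L-\gamma cs_R}{v_Lv_R-\gamma^2c^2},\qquad \alpha_R^{\mathrm{raw}}=\frac{v_Ls_R-\gamma cs_L}{v_Lv_R-\gamma^2c^2}, \] $\alpha_k=\alpha_k^{\mathrm{raw}}/(|\alpha_L^{\mathrm{raw}}|+|\alpha_R^{\mathrm{raw}}|)$ for $k\in\{L,R\}$, and the combined node portfolio $(\alpha_L\hat w_L,\alpha_R\hat w_R)\in\mathbb{R}^{L\cup R}$. Fix $\hat w_R$ and let $k>0$. Then the combined node portfolio obtained from $(k\hat w_L,\hat w_R)$ lies on the same ray as the one obtained from $(\hat w_L,\hat w_R)$, i.e.\ it equals it multiplied by a strictly positive scalar (whenever both are defined).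
   Context: $\Sigma_{LL},\Sigma_{LR},\Sigma_{RR}$ denote submatrices of $\Sigma$ indexed by the given index sets and $\mu_L,\mu_R$ the corresponding subvectors of $\mu$. This is the node-level step (with $L^1$ normalisation) of the HRP-$\Sigma\mu$ allocator. *)

theory Defs
  imports "HOL-Analysis.Analysis"
begin

text \<open>Covariance matrix Sigma : real^'n^'n (index type 'n = {1..N}); index sets L R :: 'n set;
  representatives of w_L, w_R are functions 'n => real of which only the values on L (resp. R) matter.\<close>

definition sym_posdef :: "real^'n^'n \<Rightarrow> bool" where
  "sym_posdef S \<longleftrightarrow> transpose S = S \<and> (\<forall>x. x \<noteq> 0 \<longrightarrow> x \<bullet> (S *v x) > 0)"

definition bilin :: "real^'n^'n \<Rightarrow> 'n set \<Rightarrow> 'n set \<Rightarrow> ('n \<Rightarrow> real) \<Rightarrow> ('n \<Rightarrow> real) \<Rightarrow> real" where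
  "bilin S A B x y = (\<Sum>i\<in>A. \<Sum>j\<in>B. x i * S$i$j * y j)"

definition lin :: "real^'n \<Rightarrow> 'n set \<Rightarrow> ('n \<Rightarrow> real) \<Rightarrow> real" where
  "lin mu A x = (\<Sum>i\<in>A. x i * mu$i)"

definition node_denom :: "real^'n^'n \<Rightarrow> real \<Rightarrow> 'n set \<Rightarrow> 'n set \<Rightarrow> ('n \<Rightarrow> real) \<Rightarrow> ('n \<Rightarrow> real) \<Rightarrow> real" where
  "node_denom S \<gamma> L R wL wR =
     bilin S L L wL wL * bilin S R R wR wR - \<gamma>^2 * (bilin S L R wL wR)^2"

definition alpha_L_raw :: "real^'n^'n \<Rightarrow> real^'n \<Rightarrow> real \<Rightarrow> 'n set \<Rightarrow> 'n set \<Rightarrow> ('n \<Rightarrow> real) \<Rightarrow> ('n \<Rightarrow> real) \<Rightarrow> real" where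
  "alpha_L_raw S mu \<gamma> L R wL wR =
     (bilin S R R wR wR * lin mu L wL - \<gamma> * bilin S L R wL wR * lin mu R wR) / node_denom S \<gamma> L R wL wR"

definition alpha_R_raw :: "real^'n^'n \<Rightarrow> real^'n \<Rightarrow> real \<Rightarrow> 'n set \<Rightarrow> 'n set \<Rightarrow> ('n \<Rightarrow> real) \<Rightarrow> ('n \<Rightarrow> real) \<Rightarrow> real" where
  "alpha_R_raw S mu \<gamma> L R wL wR =
     (bilin S L L wL wL * lin mu R wR - \<gamma> * bilin S L R wL wR * lin mu L wL) / node_denom S \<gamma> L R wL wR"

definition alpha_norm :: "real^'n^'n \<Rightarrow> real^'n \<Rightarrow> real \<Rightarrow> 'n set \<Rightarrow> 'n set \<Rightarrow> ('n \<Rightarrow> real) \<Rightarrow> ('n \<Rightarrow> real) \<Rightarrow> real" where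
  "alpha_norm S mu \<gamma> L R wL wR = \<bar>alpha_L_raw S mu \<gamma> L R wL wR\<bar> + \<bar>alpha_R_raw S mu \<gamma> L R wL wR\<bar>"

definition node_defined :: "real^'n^'n \<Rightarrow> real^'n \<Rightarrow> real \<Rightarrow> 'n set \<Rightarrow> 'n set \<Rightarrow> ('n \<Rightarrow> real) \<Rightarrow> ('n \<Rightarrow> real) \<Rightarrow> bool" where
  "node_defined S mu \<gamma> L R wL wR \<longleftrightarrow>
     node_denom S \<gamma> L R wL wR \<noteq> 0 \<and> alpha_norm S mu \<gamma> L R wL wR \<noteq> 0"

definition node_portfolio :: "real^'n^'n \<Rightarrow> real^'n \<Rightarrow> real \<Rightarrow> 'n set \<Rightarrow> 'n set \<Rightarrow> ('n \<Rightarrow> real) \<Rightarrow> ('n \<Rightarrow> real) \<Rightarrow> 'n \<Rightarrow> real" where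
  "node_portfolio S mu \<gamma> L R wL wR i =
     (if i \<in> L then (alpha_L_raw S mu \<gamma> L R wL wR / alpha_norm S mu \<gamma> L R wL wR) * wL i
      else if i \<in> R then (alpha_R_raw S mu \<gamma> L R wL wR / alpha_norm S mu \<gamma> L R wL wR) * wR i
      else 0)"

end

theory Submission
  imports Defs
begin

lemma bilin_LL: "bilin S A A (\<lambda>i. k * x i) (\<lambda>i. k * x i) = k^2 * bilin S A A x x"
  unfolding bilin_def by (simp add: sum_distrib_left power2_eq_square mult_ac)

lemma bilin_L: "bilin S A B (\<lambda>i. k * x i) y = k * bilin S A B x y"
  unfolding bilin_def by (simp add: sum_distrib_left mult_ac)

lemma lin_k: "lin mu A (\<lambda>i. k * x i) = k * lin mu A x"
  unfolding lin_def by (simp add: sum_distrib_left mult_ac)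

theorem mainTheorem12:
  fixes S :: "real^'n^'n" and mu :: "real^'n" and \<gamma> k :: real
    and L R :: "'n set" and wL wR :: "'n \<Rightarrow> real"
  assumes "sym_posdef S"
    and "0 \<le> \<gamma>" and "\<gamma> \<le> 1"
    and "L \<inter> R = {}" and "L \<noteq> {}" and "R \<noteq> {}"
    and "k > 0"
    and "node_defined S mu \<gamma> L R wL wR"
    and "node_defined S mu \<gamma> L R (\<lambda>i. k * wL i) wR"
  shows "\<exists>t>0. node_portfolio S mu \<gamma> L R (\<lambda>i. k * wL i) wR
                = (\<lambda>i. t * node_portfolio S mu \<gamma> L R wL wR i)"
proof -
  let ?w = "\<lambda>i. k * wL i"
  have D: "node_denom S \<gamma> L R ?w wR = k^2 * node_denom S \<gamma> L R wL wR"
    unfolding node_denom_def bilin_LL bilin_L by (simp add: algebra_simps power2_eq_square)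
  have D0: "node_denom S \<gamma> L R wL wR \<noteq> 0" using assms(8) node_defined_def by blast
  have aL: "alpha_L_raw S mu \<gamma> L R ?w wR = alpha_L_raw S mu \<gamma> L R wL wR / k"
    unfolding alpha_L_raw_def D unfolding bilin_L lin_k
    using assms(7) D0 by (simp add: field_simps power2_eq_square)
  have aR: "alpha_R_raw S mu \<gamma> L R ?w wR = alpha_R_raw S mu \<gamma> L R wL wR"
    unfolding alpha_R_raw_def D unfolding bilin_LL bilin_L lin_k
    using assms(7) D0 by (simp add: field_simps power2_eq_square)
  define n where "n = alpha_norm S mu \<gamma> L R wL wR"
  define n' where "n' = alpha_norm S mu \<gamma> L R ?w wR"
  have n0: "n > 0" using assms(8) unfolding node_defined_def n_def alpha_norm_def by auto
  have n'0: "n' > 0" using assms(9) unfolding node_defined_def n'_def alpha_norm_def by auto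
  show ?thesis
  proof (intro exI[of _ "n / n'"] conjI ext)
    show "n / n' > 0" using n0 n'0 by simp
    fix i
    show "node_portfolio S mu \<gamma> L R ?w wR i = n / n' * node_portfolio S mu \<gamma> L R wL wR i"
      unfolding node_portfolio_def aL aR n_def[symmetric] n'_def[symmetric]
      using n0 n'0 assms(7) by (simp add: field_simps)
  qed
qed

end
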